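(* Let $G$, $\delta$, $l$ satisfy: $G$ torsion-free, $l:G\to\mathbb{Z}^n$ a $\delta$-regular $\delta$-hyperbolic length function with (A) $ht(\delta)=1$, (B) for all $g\in G$ and nonzero integers $m$, $l(g^m)<l(g)$ implies $ht(l(g)-l(g^m))=1$, (C) $l(g)>0$ for $g\ne1$. Then for every $k\ge1$ the length function $l_k:G\to\mathbb{Z}^{n-k}$ is $0$-hyperbolic, $0$-regular, and satisfies $l_k(g^2)\ge l_k(g)$ for all $g\in G$.
   Context: $\mathbb{Z}^m$ (and $\mathbb{Q}^m$) carries the right lexicographic order: $(a_1,\dots,a_m)<(b_1,\dots,b_m)$ iff $a_j<b_j$ for the largest $j$ with $a_j\ne b_j$. $ht(a)$ is the largest index $k$ with $a_k\ne0$, $ht(0)=0$. A length function $L:G\to\mathbb{Z}^m$ satisfies $L(1)=0$, $L(g)\ge0$, $L(g^{-1})=L(g)$, $L(gh)\le L(g)+L(h)$; $c_L(g,h)=\tfrac12(L(g)+L(h)-L(g^{-1}h))$. $L$ is $\delta$-hyperbolic if $c_L(f,g)\ge\min\{c_L(f,h),c_L(g,h)\}-\delta$ for all $f,g,h$. $g=a\circ b$ means $g=ab$ and $L(g)=L(a)+L(b)$; $L$ is $\delta$-regular if for all $g,h$ there exist $g_c,h_c,g_d,h_d$ with $L(g_c)=L(h_c)=c_L(g,h)$, $g=g_c\circ g_d$, $h=h_c\circ h_d$, $L(g_c^{-1}h_c)\le4\delta$. For $k\ge1$, $l_k(g)=(a_{k+1},\dots,a_n)$ where $l(g)=(a_1,\dots,a_n)$.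 *)

theory Defs
  imports "HOL-Algebra.Algebra"
begin

text \<open>Vectors in Z^m / Q^m are lists of length m; entry a_j is the list element at index j-1.\<close>

definition rlex_less :: "'a::linorder list \<Rightarrow> 'a list \<Rightarrow> bool" where
  "rlex_less a b \<longleftrightarrow>
     (\<exists>j<length a. a ! j < b ! j \<and> (\<forall>i. j < i \<and> i < length a \<longrightarrow> a ! i = b ! i))"

definition rlex_le :: "'a::linorder list \<Rightarrow> 'a list \<Rightarrow> bool" where
  "rlex_le a b \<longleftrightarrow> a = b \<or> rlex_less a b"

definition rlex_min :: "'a::linorder list \<Rightarrow> 'a list \<Rightarrow> 'a list" where
  "rlex_min a b = (if rlex_le a b then a else b)"

definition vadd :: "'a::plus list \<Rightarrow> 'a list \<Rightarrow> 'a list" where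
  "vadd a b = map2 (+) a b"

definition vsub :: "'a::minus list \<Rightarrow> 'a list \<Rightarrow> 'a list" where
  "vsub a b = map2 (-) a b"

definition vzero :: "nat \<Rightarrow> 'a::zero list" where
  "vzero m = replicate m 0"

definition ht :: "'a::zero list \<Rightarrow> nat" where
  "ht a = (if \<exists>k<length a. a ! k \<noteq> 0
           then Suc (GREATEST k. k < length a \<and> a ! k \<noteq> 0) else 0)"

definition torsion_free :: "('g, 'm) monoid_scheme \<Rightarrow> bool" where
  "torsion_free G \<longleftrightarrow>
     (\<forall>g\<in>carrier G. g \<noteq> \<one>\<^bsub>G\<^esub> \<longrightarrow> (\<forall>n::nat. n > 0 \<longrightarrow> g [^]\<^bsub>G\<^esub> n \<noteq> \<one>\<^bsub>G\<^esub>))"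

definition length_function :: "('g, 'm) monoid_scheme \<Rightarrow> nat \<Rightarrow> ('g \<Rightarrow> int list) \<Rightarrow> bool" where
  "length_function G m L \<longleftrightarrow>
     (\<forall>g\<in>carrier G. length (L g) = m) \<and>
     L \<one>\<^bsub>G\<^esub> = vzero m \<and>
     (\<forall>g\<in>carrier G. rlex_le (vzero m) (L g)) \<and>
     (\<forall>g\<in>carrier G. L (inv\<^bsub>G\<^esub> g) = L g) \<and>
     (\<forall>g\<in>carrier G. \<forall>h\<in>carrier G. rlex_le (L (g \<otimes>\<^bsub>G\<^esub> h)) (vadd (L g) (L h)))"

definition gromov_prod :: "('g, 'm) monoid_scheme \<Rightarrow> ('g \<Rightarrow> int list) \<Rightarrow> 'g \<Rightarrow> 'g \<Rightarrow> rat list" where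
  "gromov_prod G L g h =
     map (\<lambda>x. of_int x / 2) (vsub (vadd (L g) (L h)) (L (inv\<^bsub>G\<^esub> g \<otimes>\<^bsub>G\<^esub> h)))"

definition hyperbolic :: "('g, 'm) monoid_scheme \<Rightarrow> ('g \<Rightarrow> int list) \<Rightarrow> int list \<Rightarrow> bool" where
  "hyperbolic G L \<delta> \<longleftrightarrow>
     (\<forall>f\<in>carrier G. \<forall>g\<in>carrier G. \<forall>h\<in>carrier G.
        rlex_le (vsub (rlex_min (gromov_prod G L f h) (gromov_prod G L g h)) (map of_int \<delta>))
                (gromov_prod G L f g))"

definition reduced_prod :: "('g, 'm) monoid_scheme \<Rightarrow> ('g \<Rightarrow> int list) \<Rightarrow> 'g \<Rightarrow> 'g \<Rightarrow> 'g \<Rightarrow> bool" where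
  "reduced_prod G L g a b \<longleftrightarrow> g = a \<otimes>\<^bsub>G\<^esub> b \<and> L g = vadd (L a) (L b)"

definition regular :: "('g, 'm) monoid_scheme \<Rightarrow> ('g \<Rightarrow> int list) \<Rightarrow> int list \<Rightarrow> bool" where
  "regular G L \<delta> \<longleftrightarrow>
     (\<forall>g\<in>carrier G. \<forall>h\<in>carrier G. \<exists>gc\<in>carrier G. \<exists>hc\<in>carrier G. \<exists>gd\<in>carrier G. \<exists>hd\<in>carrier G.
        map of_int (L gc) = gromov_prod G L g h \<and>
        map of_int (L hc) = gromov_prod G L g h \<and>
        reduced_prod G L g gc gd \<and> reduced_prod G L h hc hd \<and>
        rlex_le (L (inv\<^bsub>G\<^esub> gc \<otimes>\<^bsub>G\<^esub> hc)) (map (\<lambda>x. 4 * x) \<delta>))"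

definition trunc_len :: "nat \<Rightarrow> ('g \<Rightarrow> int list) \<Rightarrow> 'g \<Rightarrow> int list" where
  "trunc_len k L g = drop k (L g)"

end

theory Submission
  imports Defs
begin

lemma rlex_less_irrefl: "\<not> rlex_less a a"
  by (auto simp: rlex_less_def)

lemma rlex_less_drop_imp:
  assumes "length a = length b" "rlex_less (drop k a) (drop k b)"
  shows "rlex_less a b"
proof -
  from assms(2) obtain j where j: "j < length (drop k a)" "drop k a ! j < drop k b ! j"
    "\<forall>i. j<i \<and> i<length (drop k a) \<longrightarrow> drop k a ! i = drop k b ! i"
    unfolding rlex_less_def by blast
  show ?thesis unfolding rlex_less_def
  proof (intro exI[of _ "k+j"] conjI allI impI)
    show "k+j < length a" using j(1) by simp
    show "a!(k+j) < b!(k+j)" using j(2) assms(1) j(1) by simp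
    fix i assume i: "k+j<i \<and> i<length a"
    then have "j < i-k" "i-k < length (drop k a)" by auto
    with j(3) have "drop k a ! (i-k) = drop k b ! (i-k)" by blast
    then show "a!i = b!i" using i assms(1) by simp
  qed
qed

lemma rlex_less_drop:
  assumes "length a = length b" "rlex_less a b"
  shows "rlex_le (drop k a) (drop k b)"
proof -
  from assms(2) obtain j where j: "j < length a" "a ! j < b ! j"
    "\<forall>i. j<i \<and> i<length a \<longrightarrow> a ! i = b ! i"
    unfolding rlex_less_def by blast
  show ?thesis
  proof (cases "k \<le> j")
    case True
    have "rlex_less (drop k a) (drop k b)" unfolding rlex_less_def
    proof (intro exI[of _ "j-k"] conjI allI impI)
      show "j-k < length (drop k a)" using j(1) True by simp
      show "drop k a ! (j-k) < drop k b ! (j-k)" using j True assms(1) by simp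
      fix i assume hi: "j - k < i \<and> i < length (drop k a)"
      have "j < k+i" "k+i < length a" using hi True assms(1) by auto
      then have "a!(k+i) = b!(k+i)" using j(3) by blast
      moreover have "drop k a ! i = a!(k+i)" using \<open>k+i < length a\<close> by simp
      moreover have "drop k b ! i = b!(k+i)" using \<open>k+i < length a\<close> assms(1) by simp
      ultimately show "drop k a ! i = drop k b ! i" by simp
    qed
    then show ?thesis unfolding rlex_le_def by blast
  next
    case False
    have "drop k a = drop k b"
      by (rule nth_equalityI) (use j(3) False assms(1) in auto)
    then show ?thesis unfolding rlex_le_def by blast
  qed
qed

lemma rlex_le_drop:
  assumes "length a = length b" "rlex_le a b"
  shows "rlex_le (drop k a) (drop k b)"
  using assms rlex_less_drop unfolding rlex_le_def by blast

lemma rlex_total: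
  assumes "length a = length b"
  shows "rlex_le a b \<or> rlex_less b a"
proof (cases "a = b")
  case True then show ?thesis by (simp add: rlex_le_def)
next
  case False
  then obtain i where i: "i < length a" "a ! i \<noteq> b ! i"
    using assms nth_equalityI by blast
  define P where "P = (\<lambda>j. j < length a \<and> a ! j \<noteq> b ! j)"
  define j where "j = Greatest P"
  have Pj: "P j" unfolding j_def
    by (rule GreatestI_nat[of P i "length a"]) (auto simp: P_def i)
  have up: "\<forall>i'. j<i' \<and> i'<length a \<longrightarrow> a ! i' = b ! i'"
  proof (intro allI impI)
    fix i' assume h: "j<i' \<and> i'<length a"
    show "a ! i' = b ! i'"
    proof (rule ccontr)
      assume "a ! i' \<noteq> b ! i'"
      then have "P i'" using h by (simp add: P_def)
      then have "i' \<le> j" unfolding j_def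
        by (rule Greatest_le_nat[of P i' "length a"]) (auto simp: P_def)
      with h show False by simp
    qed
  qed
  from Pj have "a ! j < b ! j \<or> b ! j < a ! j" by (auto simp: P_def)
  then show ?thesis
  proof
    assume "a ! j < b ! j"
    then have "rlex_less a b" unfolding rlex_less_def using Pj up by (auto simp: P_def)
    then show ?thesis by (simp add: rlex_le_def)
  next
    assume "b ! j < a ! j"
    then have "rlex_less b a" unfolding rlex_less_def using Pj up assms by (auto simp: P_def)
    then show ?thesis by simp
  qed
qed

lemma rlex_antisym:
  assumes "length a = length b" "rlex_le a b" "rlex_le b a"
  shows "a = b"
proof (rule ccontr)
  assume ne: "a \<noteq> b"
  with assms have "rlex_less a b" "rlex_less b a" unfolding rlex_le_def by auto
  then obtain j1 j2 where j1: "j1 < length a" "a ! j1 < b ! j1"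
    "\<forall>i. j1<i \<and> i<length a \<longrightarrow> a ! i = b ! i"
    and j2: "j2 < length b" "b ! j2 < a ! j2"
    "\<forall>i. j2<i \<and> i<length b \<longrightarrow> b ! i = a ! i"
    unfolding rlex_less_def by blast
  consider "j1 < j2" | "j2 < j1" | "j1 = j2" by linarith
  then show False
  proof cases
    case 1 then show ?thesis using j1 j2 assms(1) by (metis less_irrefl)
  next
    case 2 then show ?thesis using j1 j2 assms(1) by (metis less_irrefl)
  next
    case 3 then show ?thesis using j1 j2 by (metis less_asym)
  qed
qed

lemma rlex_min_drop:
  assumes "length a = length b"
  shows "rlex_min (drop k a) (drop k b) = drop k (rlex_min a b)"
proof (cases "rlex_le a b")
  case True
  then have "rlex_le (drop k a) (drop k b)" using rlex_le_drop assms by blast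
  then show ?thesis using True by (simp add: rlex_min_def)
next
  case False
  then have "rlex_less b a" using rlex_total assms by blast
  then have h: "rlex_le (drop k b) (drop k a)" using rlex_less_drop assms by metis
  show ?thesis
  proof (cases "rlex_le (drop k a) (drop k b)")
    case True
    then have "drop k a = drop k b" using h rlex_antisym assms by (metis length_drop)
    then show ?thesis using False by (simp add: rlex_min_def)
  next
    case F2: False
    then show ?thesis using False by (simp add: rlex_min_def)
  qed
qed

lemma ht1_tail:
  assumes "ht a = 1" "1 \<le> i" "i < length a"
  shows "a ! i = 0"
proof (rule ccontr)
  assume nz: "a ! i \<noteq> 0"
  then have ex: "\<exists>k<length a. a ! k \<noteq> 0" using assms by blast
  then have "(GREATEST k. k < length a \<and> a ! k \<noteq> 0) = 0" using assms(1) by (simp add: ht_def)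
  moreover have "i \<le> (GREATEST k. k < length a \<and> a ! k \<noteq> 0)"
    by (rule Greatest_le_nat[where b="length a"]) (use nz assms in auto)
  ultimately show False using assms(2) by simp
qed

lemma ht1_drop:
  assumes "ht a = 1" "1 \<le> k"
  shows "drop k a = replicate (length a - k) 0"
proof (rule nth_equalityI)
  fix i assume "i < length (drop k a)"
  then show "drop k a ! i = replicate (length a - k) 0 ! i"
    using assms ht1_tail[of a "k+i"] by simp
qed simp

lemma vsub_zero:
  fixes x :: "'a::ab_group_add list"
  assumes "length x \<le> m"
  shows "vsub x (replicate m 0) = x"
  using assms by (simp add: vsub_def zip_replicate2 map_idI)

lemma gromov_trunc:
  "gromov_prod G (trunc_len k L) g h = drop k (gromov_prod G L g h)"
  by (simp add: gromov_prod_def trunc_len_def vadd_def vsub_def drop_map drop_zip)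

lemma drop_vadd: "drop k (vadd a b) = vadd (drop k a) (drop k b)"
  by (simp add: vadd_def drop_map drop_zip)

lemma drop_vsub: "drop k (vsub a b) = vsub (drop k a) (drop k b)"
  by (simp add: vsub_def drop_map drop_zip)

theorem lemma3p3:
  fixes G :: "('g, 'm) monoid_scheme" and l :: "'g \<Rightarrow> int list"
    and n :: nat and \<delta> :: "int list"
  assumes grp: "group G"
    and tf: "torsion_free G"
    and lf: "length_function G n l"
    and dlen: "length \<delta> = n"
    and hyp: "hyperbolic G l \<delta>"
    and reg: "regular G l \<delta>"
    and A: "ht \<delta> = 1"
    and B: "\<And>g m. g \<in> carrier G \<Longrightarrow> (m::int) \<noteq> 0 \<Longrightarrow>
              rlex_less (l (g [^]\<^bsub>G\<^esub> m)) (l g) \<Longrightarrow> ht (vsub (l g) (l (g [^]\<^bsub>G\<^esub> m))) = 1"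
    and C: "\<And>g. g \<in> carrier G \<Longrightarrow> g \<noteq> \<one>\<^bsub>G\<^esub> \<Longrightarrow> rlex_less (vzero n) (l g)"
  shows "\<forall>k\<ge>1.
           length_function G (n - k) (trunc_len k l) \<and>
           hyperbolic G (trunc_len k l) (vzero (n - k)) \<and>
           regular G (trunc_len k l) (vzero (n - k)) \<and>
           (\<forall>g\<in>carrier G. rlex_le (trunc_len k l g) (trunc_len k l (g \<otimes>\<^bsub>G\<^esub> g)))"
proof (intro allI impI)
  fix k :: nat assume k: "1 \<le> k"
  interpret G: group G by (rule grp)
  have len: "\<And>g. g \<in> carrier G \<Longrightarrow> length (l g) = n" using lf by (simp add: length_function_def)
  have l1: "l \<one>\<^bsub>G\<^esub> = vzero n" using lf by (simp add: length_function_def)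
  have lpos: "\<And>g. g \<in> carrier G \<Longrightarrow> rlex_le (vzero n) (l g)" using lf by (simp add: length_function_def)
  have linv: "\<And>g. g \<in> carrier G \<Longrightarrow> l (inv\<^bsub>G\<^esub> g) = l g" using lf by (simp add: length_function_def)
  have lsub: "\<And>g h. g \<in> carrier G \<Longrightarrow> h \<in> carrier G \<Longrightarrow> rlex_le (l (g \<otimes>\<^bsub>G\<^esub> h)) (vadd (l g) (l h))"
    using lf by (simp add: length_function_def)
  have ddrop: "drop k \<delta> = replicate (n - k) 0" using ht1_drop[OF A k] dlen by simp
  have dz: "\<And>m. drop k (vzero m) = vzero (m - k)" by (simp add: vzero_def)
  have glen: "\<And>g h. g \<in> carrier G \<Longrightarrow> h \<in> carrier G \<Longrightarrow> length (gromov_prod G l g h) = n"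
    by (simp add: gromov_prod_def vadd_def vsub_def len)
  show "length_function G (n - k) (trunc_len k l) \<and>
           hyperbolic G (trunc_len k l) (vzero (n - k)) \<and>
           regular G (trunc_len k l) (vzero (n - k)) \<and>
           (\<forall>g\<in>carrier G. rlex_le (trunc_len k l g) (trunc_len k l (g \<otimes>\<^bsub>G\<^esub> g)))"
  proof (intro conjI)
    show "length_function G (n - k) (trunc_len k l)"
      unfolding length_function_def
    proof (intro conjI ballI)
      fix g assume g: "g \<in> carrier G"
      show "length (trunc_len k l g) = n - k" by (simp add: trunc_len_def len g)
      show "rlex_le (vzero (n - k)) (trunc_len k l g)"
        using rlex_le_drop[of "vzero n" "l g" k] lpos[OF g] len[OF g] dz
        by (simp add: trunc_len_def vzero_def)
      show "trunc_len k l (inv\<^bsub>G\<^esub> g) = trunc_len k l g" by (simp add: trunc_len_def linv g)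
    next
      show "trunc_len k l \<one>\<^bsub>G\<^esub> = vzero (n - k)" by (simp add: trunc_len_def l1 dz)
    next
      fix g h assume g: "g \<in> carrier G" and h: "h \<in> carrier G"
      have "rlex_le (drop k (l (g \<otimes>\<^bsub>G\<^esub> h))) (drop k (vadd (l g) (l h)))"
        by (rule rlex_le_drop[OF _ lsub[OF g h]]) (simp add: len g h vadd_def)
      then show "rlex_le (trunc_len k l (g \<otimes>\<^bsub>G\<^esub> h)) (vadd (trunc_len k l g) (trunc_len k l h))"
        by (simp add: trunc_len_def drop_vadd)
    qed
  next
    show "hyperbolic G (trunc_len k l) (vzero (n - k))"
      unfolding hyperbolic_def
    proof (intro ballI)
      fix f g h assume f: "f \<in> carrier G" and g: "g \<in> carrier G" and h: "h \<in> carrier G"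
      let ?a = "gromov_prod G l f h" and ?b = "gromov_prod G l g h" and ?c = "gromov_prod G l f g"
      have H: "rlex_le (vsub (rlex_min ?a ?b) (map of_int \<delta>)) ?c" using hyp f g h
        by (simp add: hyperbolic_def)
      have lm: "length (rlex_min ?a ?b) = n" using glen f g h by (simp add: rlex_min_def)
      have "rlex_le (drop k (vsub (rlex_min ?a ?b) (map of_int \<delta>))) (drop k ?c)"
        by (rule rlex_le_drop[OF _ H]) (simp add: vsub_def lm dlen glen f g)
      moreover have "drop k (vsub (rlex_min ?a ?b) (map of_int \<delta>)) = drop k (rlex_min ?a ?b)"
        using lm by (simp add: drop_vsub drop_map ddrop vsub_zero)
      moreover have "rlex_min (drop k ?a) (drop k ?b) = drop k (rlex_min ?a ?b)"
        by (rule rlex_min_drop) (simp add: glen f g h)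
      ultimately have "rlex_le (rlex_min (drop k ?a) (drop k ?b)) (drop k ?c)" by simp
      moreover have "vsub (rlex_min (drop k ?a) (drop k ?b)) (map of_int (vzero (n - k)))
          = rlex_min (drop k ?a) (drop k ?b)"
        using lm \<open>rlex_min (drop k ?a) (drop k ?b) = drop k (rlex_min ?a ?b)\<close>
        by (simp add: vzero_def vsub_zero)
      ultimately show "rlex_le (vsub (rlex_min (gromov_prod G (trunc_len k l) f h) (gromov_prod G (trunc_len k l) g h))
                (map of_int (vzero (n - k)))) (gromov_prod G (trunc_len k l) f g)"
        by (simp add: gromov_trunc)
    qed
  next
    show "regular G (trunc_len k l) (vzero (n - k))"
      unfolding regular_def
    proof (intro ballI)
      fix g h assume g: "g \<in> carrier G" and h: "h \<in> carrier G"
      from reg g h obtain gc hc gd hd where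
        c: "gc \<in> carrier G" "hc \<in> carrier G" "gd \<in> carrier G" "hd \<in> carrier G"
        and e1: "map of_int (l gc) = gromov_prod G l g h"
        and e2: "map of_int (l hc) = gromov_prod G l g h"
        and r1: "reduced_prod G l g gc gd" and r2: "reduced_prod G l h hc hd"
        and r3: "rlex_le (l (inv\<^bsub>G\<^esub> gc \<otimes>\<^bsub>G\<^esub> hc)) (map (\<lambda>x. 4 * x) \<delta>)"
        using reg[unfolded regular_def, rule_format, OF g h] by blast
      have ic: "inv\<^bsub>G\<^esub> gc \<otimes>\<^bsub>G\<^esub> hc \<in> carrier G" using c by simp
      have "rlex_le (drop k (l (inv\<^bsub>G\<^esub> gc \<otimes>\<^bsub>G\<^esub> hc))) (drop k (map (\<lambda>x. 4 * x) \<delta>))"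
        by (rule rlex_le_drop[OF _ r3]) (simp add: len ic dlen)
      then have r3': "rlex_le (trunc_len k l (inv\<^bsub>G\<^esub> gc \<otimes>\<^bsub>G\<^esub> hc)) (map (\<lambda>x. 4 * x) (vzero (n - k)))"
        by (simp add: trunc_len_def drop_map ddrop vzero_def)
      show "\<exists>gc\<in>carrier G. \<exists>hc\<in>carrier G. \<exists>gd\<in>carrier G. \<exists>hd\<in>carrier G.
        map of_int (trunc_len k l gc) = gromov_prod G (trunc_len k l) g h \<and>
        map of_int (trunc_len k l hc) = gromov_prod G (trunc_len k l) g h \<and>
        reduced_prod G (trunc_len k l) g gc gd \<and> reduced_prod G (trunc_len k l) h hc hd \<and>
        rlex_le (trunc_len k l (inv\<^bsub>G\<^esub> gc \<otimes>\<^bsub>G\<^esub> hc)) (map (\<lambda>x. 4 * x) (vzero (n - k)))"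
      proof (intro bexI conjI)
        show "map of_int (trunc_len k l gc) = gromov_prod G (trunc_len k l) g h"
          using e1 by (simp add: gromov_trunc trunc_len_def drop_map[symmetric])
        show "map of_int (trunc_len k l hc) = gromov_prod G (trunc_len k l) g h"
          using e2 by (simp add: gromov_trunc trunc_len_def drop_map[symmetric])
        show "reduced_prod G (trunc_len k l) g gc gd"
          unfolding reduced_prod_def trunc_len_def using r1[unfolded reduced_prod_def] drop_vadd by metis
        show "reduced_prod G (trunc_len k l) h hc hd"
          unfolding reduced_prod_def trunc_len_def using r2[unfolded reduced_prod_def] drop_vadd by metis
      qed (use r3' c in auto)
    qed
  next
    show "\<forall>g\<in>carrier G. rlex_le (trunc_len k l g) (trunc_len k l (g \<otimes>\<^bsub>G\<^esub> g))"
    proof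
      fix g assume g: "g \<in> carrier G"
      have gg: "g [^]\<^bsub>G\<^esub> (2::int) = g \<otimes>\<^bsub>G\<^esub> g"
      proof -
        have "g [^]\<^bsub>G\<^esub> (2::int) = g [^]\<^bsub>G\<^esub> (2::nat)"
          using int_pow_int[where G=G and x=g and n=2] by simp
        also have "\<dots> = g \<otimes>\<^bsub>G\<^esub> g" using g by (simp add: numeral_2_eq_2)
        finally show ?thesis .
      qed
      have ggc: "g \<otimes>\<^bsub>G\<^esub> g \<in> carrier G" using g by simp
      show "rlex_le (trunc_len k l g) (trunc_len k l (g \<otimes>\<^bsub>G\<^esub> g))"
      proof (rule ccontr)
        assume nle: "\<not> ?thesis"
        then have lt: "rlex_less (drop k (l (g \<otimes>\<^bsub>G\<^esub> g))) (drop k (l g))"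
          using rlex_total[of "trunc_len k l g" "trunc_len k l (g \<otimes>\<^bsub>G\<^esub> g)"]
          by (simp add: trunc_len_def len g ggc)
        then have "rlex_less (l (g \<otimes>\<^bsub>G\<^esub> g)) (l g)"
          by (rule rlex_less_drop_imp[rotated]) (simp add: len g ggc)
        then have H: "ht (vsub (l g) (l (g \<otimes>\<^bsub>G\<^esub> g))) = 1" using B[OF g, of 2] gg by simp
        from lt obtain j where j: "j < length (drop k (l (g \<otimes>\<^bsub>G\<^esub> g)))"
          "drop k (l (g \<otimes>\<^bsub>G\<^esub> g)) ! j < drop k (l g) ! j"
          unfolding rlex_less_def by blast
        have "vsub (l g) (l (g \<otimes>\<^bsub>G\<^esub> g)) ! (k + j) = 0"
          by (rule ht1_tail[OF H]) (use k j in \<open>simp_all add: vsub_def len g ggc\<close>)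
        then show False using j k by (simp add: vsub_def len g ggc)
      qed
    qed
  qed
qed

end
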